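(* Let $G$ be a compact, connected Lie group whose Lie algebra is simple, and let $(\pi,V)$ be an irreducible representation of $G$ on a finite-dimensional real vector space $V$. Fix $v\in V$ and let $f\colon G\to V$ be $f(x)=\pi(x)v$. Suppose $x_1,\ldots,x_n\in G$ are such that the convex hull of $f(x_1),\ldots,f(x_n)$ contains $0$ as an interior point. Then \[df_{x_1}T_{x_1}(G)+df_{x_2}T_{x_2}(G)+\cdots+df_{x_n}T_{x_n}(G)=V.\]
   Context: Here $df_x\colon T_x(G)\to V$ is the differential of $f$ at $x$. *)

theory Defs
  imports "HOL-Analysis.Analysis" "HOL-Library.Set_Algebras"
begin

text \<open>Compact Lie groups are realised as compact subgroups of GL(n,R)
  (closed, hence embedded Lie subgroups).\<close>

definition matrix_group :: "(real^'n^'n) set \<Rightarrow> bool" where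
  "matrix_group G \<longleftrightarrow> G \<subseteq> {A. invertible A} \<and> mat 1 \<in> G
     \<and> (\<forall>A\<in>G. \<forall>B\<in>G. A ** B \<in> G) \<and> (\<forall>A\<in>G. matrix_inv A \<in> G)"

definition tangent_space :: "(real^'n^'n) set \<Rightarrow> real^'n^'n \<Rightarrow> (real^'n^'n) set" where
  "tangent_space G x = {X. \<exists>\<gamma>. (\<forall>t. \<gamma> t \<in> G) \<and> \<gamma> 0 = x \<and> (\<gamma> has_vector_derivative X) (at 0)}"

definition lie_algebra :: "(real^'n^'n) set \<Rightarrow> (real^'n^'n) set" where
  "lie_algebra G = tangent_space G (mat 1)"

definition lie_bracket :: "real^'n^'n \<Rightarrow> real^'n^'n \<Rightarrow> real^'n^'n" where
  "lie_bracket X Y = X ** Y - Y ** X"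

definition lie_ideal :: "(real^'n^'n) set \<Rightarrow> (real^'n^'n) set \<Rightarrow> bool" where
  "lie_ideal L I \<longleftrightarrow> subspace I \<and> I \<subseteq> L \<and> (\<forall>X\<in>L. \<forall>Y\<in>I. lie_bracket X Y \<in> I)"

definition simple_lie_algebra :: "(real^'n^'n) set \<Rightarrow> bool" where
  "simple_lie_algebra L \<longleftrightarrow> (\<exists>X\<in>L. \<exists>Y\<in>L. lie_bracket X Y \<noteq> 0)
     \<and> (\<forall>I. lie_ideal L I \<longrightarrow> I = {0} \<or> I = L)"

definition representation :: "(real^'n^'n) set \<Rightarrow> (real^'n^'n \<Rightarrow> 'v::euclidean_space \<Rightarrow> 'v) \<Rightarrow> bool" where
  "representation G \<pi> \<longleftrightarrow> (\<forall>x\<in>G. linear (\<pi> x)) \<and> \<pi> (mat 1) = id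
     \<and> (\<forall>x\<in>G. \<forall>y\<in>G. \<pi> (x ** y) = \<pi> x \<circ> \<pi> y)
     \<and> (\<forall>v. continuous_on G (\<lambda>x. \<pi> x v))"

definition irreducible_rep :: "(real^'n^'n) set \<Rightarrow> (real^'n^'n \<Rightarrow> 'v::euclidean_space \<Rightarrow> 'v) \<Rightarrow> bool" where
  "irreducible_rep G \<pi> \<longleftrightarrow> representation G \<pi> \<and>
     (\<forall>W. subspace W \<and> (\<forall>x\<in>G. \<pi> x ` W \<subseteq> W) \<longrightarrow> W = {0} \<or> W = UNIV)"

text \<open>Image of the differential of f at x, df_x(T_x G), where f is a map G \<rightarrow> V:
  the velocities of f \<circ> \<gamma> for curves \<gamma> in G through x.\<close>
definition diff_image :: "(real^'n^'n) set \<Rightarrow> (real^'n^'n \<Rightarrow> 'v::real_normed_vector) \<Rightarrow> real^'n^'n \<Rightarrow> 'v set" where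
  "diff_image G f x = {w. \<exists>\<gamma> X. (\<forall>t. \<gamma> t \<in> G) \<and> \<gamma> 0 = x \<and> (\<gamma> has_vector_derivative X) (at 0)
        \<and> ((\<lambda>t. f (\<gamma> t)) has_vector_derivative w) (at 0)}"

end

theory Submission
  imports Defs
begin


typedef (overloaded) 'a mx = "UNIV :: ('a::euclidean_space \<Rightarrow>\<^sub>L 'a) set" by simp

setup_lifting type_definition_mx

instantiation mx :: (euclidean_space) real_normed_algebra_1
begin
lift_definition zero_mx :: "'a mx" is 0 .
lift_definition one_mx :: "'a mx" is id_blinfun .
lift_definition plus_mx :: "'a mx \<Rightarrow> 'a mx \<Rightarrow> 'a mx" is "(+)" .
lift_definition minus_mx :: "'a mx \<Rightarrow> 'a mx \<Rightarrow> 'a mx" is "(-)" .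
lift_definition uminus_mx :: "'a mx \<Rightarrow> 'a mx" is uminus .
lift_definition times_mx :: "'a mx \<Rightarrow> 'a mx \<Rightarrow> 'a mx" is "(o\<^sub>L)" .
lift_definition scaleR_mx :: "real \<Rightarrow> 'a mx \<Rightarrow> 'a mx" is scaleR .
lift_definition norm_mx :: "'a mx \<Rightarrow> real" is norm .
lift_definition sgn_mx :: "'a mx \<Rightarrow> 'a mx" is "\<lambda>f. f /\<^sub>R norm f" .
lift_definition dist_mx :: "'a mx \<Rightarrow> 'a mx \<Rightarrow> real" is "\<lambda>f g. norm (f - g)" .
definition uniformity_mx :: "('a mx \<times> 'a mx) filter" where
  "uniformity_mx = (INF e\<in>{0 <..}. principal {(x, y). norm (Rep_mx x - Rep_mx y) < e})"
definition open_mx :: "'a mx set \<Rightarrow> bool" where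
  "open_mx U = (\<forall>x\<in>U. eventually (\<lambda>(x', y). x' = x \<longrightarrow> y \<in> U) (INF e\<in>{0 <..}. principal {(x, y). norm (Rep_mx x - Rep_mx y) < e}))"
instance
proof
  fix a b c :: "'a mx" and r s :: real
  show "a + b + c = a + (b + c)" by transfer (simp add: algebra_simps)
  show "a + b = b + a" by transfer (simp add: algebra_simps)
  show "0 + a = a" by transfer simp
  show "- a + a = 0" by transfer simp
  show "a - b = a + - b" by transfer simp
  show "r *\<^sub>R (a + b) = r *\<^sub>R a + r *\<^sub>R b" by transfer (simp add: algebra_simps)
  show "(r + s) *\<^sub>R a = r *\<^sub>R a + s *\<^sub>R a" by transfer (simp add: algebra_simps)
  show "r *\<^sub>R s *\<^sub>R a = (r * s) *\<^sub>R a" by transfer simp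
  show "1 *\<^sub>R a = a" by transfer simp
  show "a * b * c = a * (b * c)" by transfer (auto intro!: blinfun_eqI)
  show "1 * a = a" by transfer (auto intro!: blinfun_eqI)
  show "a * 1 = a" by transfer (auto intro!: blinfun_eqI)
  show "(a + b) * c = a * c + b * c" by transfer (auto intro!: blinfun_eqI simp: blinfun.bilinear_simps)
  show "a * (b + c) = a * b + a * c" by transfer (auto intro!: blinfun_eqI simp: blinfun.bilinear_simps)
  show "(0::'a mx) \<noteq> 1"
  proof transfer
    have "(1::real) \<noteq> 0" by simp
    then show "(0::'a \<Rightarrow>\<^sub>L 'a) \<noteq> id_blinfun"
      by (metis norm_blinfun_id norm_zero)
  qed
  show "r *\<^sub>R a * b = r *\<^sub>R (a * b)" by transfer (auto intro!: blinfun_eqI simp: blinfun.bilinear_simps)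
  show "a * r *\<^sub>R b = r *\<^sub>R (a * b)" by transfer (auto intro!: blinfun_eqI simp: blinfun.bilinear_simps)
  show "norm (a * b) \<le> norm a * norm b" by transfer (rule norm_blinfun_compose)
  show "norm (1::'a mx) = 1" by transfer simp
  show "(norm a = 0) = (a = 0)" by transfer simp
  show "norm (a + b) \<le> norm a + norm b" by transfer (rule norm_triangle_ineq)
  show "norm (r *\<^sub>R a) = \<bar>r\<bar> * norm a" by transfer simp
  show "sgn a = scaleR (inverse (norm a)) a" by transfer (simp add: divide_inverse_commute)
  show "dist a b = norm (a - b)" by transfer simp
  have dd: "dist x y = norm (Rep_mx x - Rep_mx y)" for x y :: "'a mx" by transfer simp
  show "(uniformity :: ('a mx \<times> 'a mx) filter) = (INF e\<in>{0 <..}. principal {(x, y). dist x y < e})"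
    by (simp add: uniformity_mx_def dd)
  show "open U = (\<forall>x\<in>U. eventually (\<lambda>(x', y). x' = x \<longrightarrow> y \<in> U) uniformity)" for U :: "'a mx set"
    by (simp add: open_mx_def uniformity_mx_def)
qed
end

lemma norm_mx_Abs: "norm (Abs_mx x) = norm x"
  by (simp add: norm_mx_def Abs_mx_inverse)

instance mx :: (euclidean_space) banach
proof
  fix X :: "nat \<Rightarrow> 'a mx"
  assume "Cauchy X"
  then have "Cauchy (\<lambda>n. Rep_mx (X n))"
    unfolding Cauchy_def dist_norm by (simp add: minus_mx.rep_eq[symmetric] norm_mx.rep_eq[symmetric])
  then obtain L where L: "(\<lambda>n. Rep_mx (X n)) \<longlonglongrightarrow> L" using Cauchy_convergent convergent_def by blast
  have "X \<longlonglongrightarrow> Abs_mx L"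
  proof (rule LIMSEQ_I)
    fix r :: real assume "r > 0"
    from LIMSEQ_D[OF L this] obtain N where N: "\<forall>n\<ge>N. norm (Rep_mx (X n) - L) < r" by blast
    show "\<exists>N. \<forall>n\<ge>N. norm (X n - Abs_mx L) < r"
      using N by (auto simp: norm_mx.rep_eq minus_mx.rep_eq Abs_mx_inverse)
  qed
  then show "convergent X" by (auto simp: convergent_def)
qed

lemma exp_remainder_bound:
  fixes x :: "'b::{real_normed_algebra_1,banach}"
  assumes "norm x \<le> 1"
  shows "norm (exp x - 1 - x) \<le> (norm x)^2"
proof -
  let ?f = "\<lambda>n. inverse (fact (n + 2)) *\<^sub>R (x ^ (n + 2))"
  let ?g = "\<lambda>n. inverse (fact (n + 2)) * (norm x ^ (n + 2))"
  have e1: "exp x - 1 - x = suminf ?f" using exp_first_two_terms[of x] by simp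
  have e2: "exp (norm x) - 1 - norm x = suminf ?g" using exp_first_two_terms[of "norm x"] by simp
  have sg: "summable ?g"
  proof -
    have "summable (\<lambda>n. norm ((norm x) ^ (n+2) /\<^sub>R fact (n+2)))"
      using summable_ignore_initial_segment[OF summable_norm_exp[of "norm x"], of 2] by simp
    then show ?thesis by (simp add: field_simps)
  qed
  have le: "norm (?f n) \<le> ?g n" for n
  proof -
    have "norm (?f n) = inverse (fact (n + 2)) * norm (x ^ (n + 2))" by simp
    also have "\<dots> \<le> ?g n" by (rule mult_left_mono[OF norm_power_ineq]) simp
    finally show ?thesis .
  qed
  have sf: "summable (\<lambda>n. norm (?f n))"
    by (rule summable_comparison_test[OF _ sg]) (use le in auto)
  have "norm (suminf ?f) \<le> suminf (\<lambda>n. norm (?f n))" by (rule summable_norm[OF sf])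
  also have "\<dots> \<le> suminf ?g" by (rule suminf_le[OF le sf sg])
  also have "\<dots> = exp (norm x) - 1 - norm x" using e2 by simp
  also have "\<dots> \<le> (norm x)^2" using exp_bound[of "norm x"] assms by simp
  finally show ?thesis using e1 by simp
qed

lemma exp_has_derivative_0:
  "((exp :: 'b::{real_normed_algebra_1,banach} \<Rightarrow> 'b) has_derivative id) (at 0)"
  unfolding has_derivative_at
proof
  show "bounded_linear (id :: 'b \<Rightarrow> 'b)" by (simp add: bounded_linear_ident id_def)
  show "(\<lambda>h::'b. norm (exp (0 + h) - exp 0 - id h) / norm h) \<midarrow>0\<rightarrow> 0"
  proof (rule Lim_null_comparison)
    show "\<forall>\<^sub>F h in at (0::'b). norm (norm (exp (0 + h) - exp 0 - id h) / norm h) \<le> norm h"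
    proof -
      have "\<forall>\<^sub>F h in at (0::'b). h \<in> ball 0 1"
        by (rule eventually_at_in_open') simp_all
      then have "\<forall>\<^sub>F h in at (0::'b). norm h < 1"
        by (rule eventually_mono) simp
      then show ?thesis
      proof eventually_elim
        case (elim h)
        show ?case
        proof (cases "h = 0")
          case True then show ?thesis by simp
        next
          case False
          have "norm (exp h - 1 - h) \<le> (norm h)^2" using exp_remainder_bound[of h] elim by simp
          then show ?thesis using False by (simp add: divide_le_eq power2_eq_square)
        qed
      qed
    qed
    show "((\<lambda>h::'b. norm h) \<longlongrightarrow> 0) (at 0)"
      by (rule tendsto_norm_zero[OF tendsto_ident_at])
  qed
qed


lemma norm_power_diff_le:
  fixes a h :: "'b::real_normed_algebra_1"
  shows "norm ((a + h) ^ n - a ^ n) \<le> (norm a + norm h) ^ n - norm a ^ n"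
proof (induction n)
  case 0 then show ?case by simp
next
  case (Suc n)
  have eq: "(a + h) ^ Suc n - a ^ Suc n = (a + h) * ((a + h) ^ n - a ^ n) + h * a ^ n"
    by (simp add: algebra_simps)
  have "norm ((a + h) ^ Suc n - a ^ Suc n) \<le> norm ((a + h) * ((a + h) ^ n - a ^ n)) + norm (h * a ^ n)"
    unfolding eq by (rule norm_triangle_ineq)
  also have "\<dots> \<le> (norm a + norm h) * ((norm a + norm h) ^ n - norm a ^ n) + norm h * norm a ^ n"
  proof (rule add_mono)
    have "norm ((a + h) * ((a + h) ^ n - a ^ n)) \<le> norm (a + h) * norm ((a + h) ^ n - a ^ n)"
      by (rule norm_mult_ineq)
    also have "\<dots> \<le> (norm a + norm h) * ((norm a + norm h) ^ n - norm a ^ n)"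
      by (rule mult_mono[OF norm_triangle_ineq Suc.IH]) simp_all
    finally show "norm ((a + h) * ((a + h) ^ n - a ^ n)) \<le> (norm a + norm h) * ((norm a + norm h) ^ n - norm a ^ n)" .
    have "norm (h * a ^ n) \<le> norm h * norm (a ^ n)" by (rule norm_mult_ineq)
    also have "\<dots> \<le> norm h * norm a ^ n" by (rule mult_left_mono[OF norm_power_ineq]) simp
    finally show "norm (h * a ^ n) \<le> norm h * norm a ^ n" .
  qed
  also have "\<dots> = (norm a + norm h) ^ Suc n - norm a ^ Suc n" by (simp add: algebra_simps)
  finally show ?case .
qed

lemma norm_exp_diff_le:
  fixes a h :: "'b::{real_normed_algebra_1,banach}"
  shows "norm (exp (a + h) - exp a) \<le> exp (norm a + norm h) - exp (norm a)"
proof -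
  let ?f = "\<lambda>n. ((a + h) ^ n - a ^ n) /\<^sub>R fact n"
  let ?g = "\<lambda>n. ((norm a + norm h) ^ n - norm a ^ n) / fact n"
  have s1: "(\<lambda>n. (a + h) ^ n /\<^sub>R fact n) sums exp (a + h)" by (rule exp_converges)
  have s2: "(\<lambda>n. a ^ n /\<^sub>R fact n) sums exp a" by (rule exp_converges)
  have sf: "?f sums (exp (a + h) - exp a)"
    using sums_diff[OF s1 s2] by (simp add: scaleR_diff_right)
  have r1: "(\<lambda>n. (norm a + norm h) ^ n /\<^sub>R fact n) sums exp (norm a + norm h)" by (rule exp_converges)
  have r2: "(\<lambda>n. norm a ^ n /\<^sub>R fact n) sums exp (norm a)" by (rule exp_converges)
  have sg: "?g sums (exp (norm a + norm h) - exp (norm a))"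
    using sums_diff[OF r1 r2] by (simp add: divide_inverse algebra_simps)
  have le: "norm (?f n) \<le> ?g n" for n
    using norm_power_diff_le[of a h n] by (simp add: divide_inverse mult.commute mult_left_mono)
  have sn: "summable (\<lambda>n. norm (?f n))"
    by (rule summable_comparison_test[OF _ sums_summable[OF sg]]) (use le in auto)
  have "norm (exp (a + h) - exp a) = norm (suminf ?f)" using sf sums_unique by metis
  also have "\<dots> \<le> suminf (\<lambda>n. norm (?f n))" by (rule summable_norm[OF sn])
  also have "\<dots> \<le> suminf ?g" by (rule suminf_le[OF le sn sums_summable[OF sg]])
  also have "\<dots> = exp (norm a + norm h) - exp (norm a)" using sg sums_unique by metis
  finally show ?thesis .
qed

lemma isCont_exp_alg: "isCont (exp :: 'b::{real_normed_algebra_1,banach} \<Rightarrow> 'b) a"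
proof -
  have "((\<lambda>h. exp (a + h) - exp a) \<longlongrightarrow> 0) (at 0)"
  proof (rule Lim_null_comparison)
    show "\<forall>\<^sub>F h in at 0. norm (exp (a + h) - exp a) \<le> exp (norm a + norm h) - exp (norm a)"
      by (intro always_eventually allI norm_exp_diff_le)
    have "((\<lambda>h::'b. exp (norm a + norm h)) \<longlongrightarrow> exp (norm a + norm (0::'b))) (at 0)"
      by (intro tendsto_intros)
    then have "((\<lambda>h::'b. exp (norm a + norm h) - exp (norm a)) \<longlongrightarrow> exp (norm a + norm (0::'b)) - exp (norm a)) (at 0)"
      by (intro tendsto_diff tendsto_const)
    then show "((\<lambda>h::'b. exp (norm a + norm h) - exp (norm a)) \<longlongrightarrow> 0) (at 0)"
      by simp
  qed
  then have "((\<lambda>h. exp (a + h)) \<longlongrightarrow> exp a) (at 0)"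
    using Lim_null by (simp add: LIM_zero_iff)
  then show ?thesis
    by (simp add: isCont_def LIM_offset_zero_iff)
qed

lemma continuous_on_exp_alg: "continuous_on S (exp :: 'b::{real_normed_algebra_1,banach} \<Rightarrow> 'b)"
  by (simp add: continuous_at_imp_continuous_on isCont_exp_alg)




definition phi :: "real^'n^'n \<Rightarrow> (real^'n) mx" where "phi A = Abs_mx (Blinfun ((*v) A))"
definition psi :: "(real^'n) mx \<Rightarrow> real^'n^'n" where "psi E = matrix (blinfun_apply (Rep_mx E))"

lemma Rep_phi: "blinfun_apply (Rep_mx (phi A)) = (*v) A"
  by (simp add: phi_def Abs_mx_inverse bounded_linear_Blinfun_apply)

lemma psi_phi[simp]: "psi (phi A) = A"
  by (simp add: psi_def Rep_phi)

lemma phi_psi[simp]: "phi (psi E) = E"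
proof -
  have "linear (blinfun_apply (Rep_mx E))" by (simp add: bounded_linear.linear blinfun.bounded_linear_right)
  then have "(*v) (psi E) = blinfun_apply (Rep_mx E)"
    unfolding psi_def by (simp add: matrix_works fun_eq_iff)
  then show ?thesis unfolding phi_def by (simp add: blinfun_apply_inverse Rep_mx_inverse)
qed

lemma phi_inj: "phi A = phi B \<longleftrightarrow> A = B"
  by (metis psi_phi)

lemma psi_inj: "psi E = psi F \<longleftrightarrow> E = F"
  by (metis phi_psi)

lemma phi_mult: "phi (A ** B) = phi A * phi B"
  by (rule Rep_mx_inject[THEN iffD1]) (auto simp: times_mx.rep_eq intro!: blinfun_eqI simp: Rep_phi matrix_vector_mul_assoc)

lemma phi_one: "phi (mat 1) = 1"
  by (rule Rep_mx_inject[THEN iffD1]) (auto simp: one_mx.rep_eq intro!: blinfun_eqI simp: Rep_phi)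

lemma phi_add: "phi (A + B) = phi A + phi B"
  by (rule Rep_mx_inject[THEN iffD1]) (auto simp: plus_mx.rep_eq intro!: blinfun_eqI simp: Rep_phi blinfun.bilinear_simps matrix_vector_mult_add_rdistrib)

lemma phi_scale: "phi (c *\<^sub>R A) = c *\<^sub>R phi A"
  by (rule Rep_mx_inject[THEN iffD1]) (auto simp: scaleR_mx.rep_eq intro!: blinfun_eqI simp: Rep_phi scaleR_matrix_vector_assoc scaleR_blinfun.rep_eq)

lemma linear_phi: "linear phi"
  by (rule linearI) (simp_all add: phi_add phi_scale)

lemma bounded_linear_phi: "bounded_linear phi"
  using linear_phi linear_conv_bounded_linear by blast

lemma psi_mult: "psi (E * F) = psi E ** psi F"
  by (metis phi_inj phi_mult phi_psi)

lemma psi_one: "psi 1 = mat 1"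
  by (metis phi_one psi_phi)

lemma psi_add: "psi (E + F) = psi E + psi F"
  by (metis phi_inj phi_add phi_psi)

lemma psi_scale: "psi (c *\<^sub>R E) = c *\<^sub>R psi E"
  by (metis phi_inj phi_scale phi_psi)

lemma linear_psi: "linear psi"
  by (rule linearI) (simp_all add: psi_add psi_scale)

lemma bounded_linear_psi: "bounded_linear psi"
proof (rule bounded_linear_intro[where K = "real (CARD('n) * CARD('n))"])
  show "psi (x + y) = psi x + psi y" for x y by (rule psi_add)
  show "psi (r *\<^sub>R x) = r *\<^sub>R psi x" for r x by (rule psi_scale)
  fix E :: "(real^'n) mx"
  have on: "onorm ((*v) (psi E)) = norm E"
    by (metis Rep_phi norm_blinfun.rep_eq norm_mx.rep_eq phi_psi)
  have "norm (psi E) \<le> (\<Sum>i\<in>UNIV. norm (psi E $ i))" by (simp add: norm_vec_def L2_set_le_sum)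
  also have "\<dots> \<le> (\<Sum>i\<in>(UNIV::'n set). \<Sum>j\<in>(UNIV::'n set). \<bar>psi E $ i $ j\<bar>)"
    by (rule sum_mono) (rule norm_le_l1_cart)
  also have "\<dots> \<le> (\<Sum>i\<in>(UNIV::'n set). \<Sum>j\<in>(UNIV::'n set). norm E)"
    by (intro sum_mono) (metis on matrix_component_le_onorm)
  also have "\<dots> = norm E * real (CARD('n) * CARD('n))" by simp
  finally show "norm (psi E) \<le> norm E * real (CARD('n) * CARD('n))" .
qed

definition mexp :: "real^'n^'n \<Rightarrow> real^'n^'n" where "mexp A = psi (exp (phi A))"

lemma mexp_zero[simp]: "mexp 0 = mat 1"
proof -
  have z: "phi 0 = 0" using linear_phi linear_0 by blast
  show ?thesis by (simp add: mexp_def psi_one z)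
qed

lemma mexp_add_scale: "mexp ((s + t) *\<^sub>R A) = mexp (s *\<^sub>R A) ** mexp (t *\<^sub>R A)"
proof -
  have "phi ((s + t) *\<^sub>R A) = s *\<^sub>R phi A + t *\<^sub>R phi A" by (simp add: phi_scale phi_add algebra_simps)
  moreover have "exp (s *\<^sub>R phi A + t *\<^sub>R phi A) = exp (s *\<^sub>R phi A) * exp (t *\<^sub>R phi A)"
    by (rule exp_add_commuting) (simp add: algebra_simps)
  ultimately show ?thesis by (simp add: mexp_def psi_mult phi_scale)
qed

lemma mexp_inv: "mexp (- A) ** mexp A = mat 1" "mexp A ** mexp (- A) = mat 1"
proof -
  have m: "phi (- A) = - phi A" by (metis phi_scale scaleR_minus1_left)
  show "mexp (- A) ** mexp A = mat 1"
    by (simp add: mexp_def m psi_mult[symmetric] psi_one) (metis exp_minus_inverse exp_times_arg_commute mult.commute exp_add_commuting add.commute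
         psi_one exp_zero neg_eq_iff_add_eq_0 exp_minus_inverse)
  show "mexp A ** mexp (- A) = mat 1"
    by (simp add: mexp_def m psi_mult[symmetric] psi_one exp_minus_inverse)
qed

lemma continuous_mexp: "continuous_on S mexp"
proof -
  have "continuous_on S (\<lambda>A. psi (exp (phi A)))"
  proof (rule continuous_on_compose2[OF linear_continuous_on[OF bounded_linear_psi] _ subset_UNIV])
    show "continuous_on S (\<lambda>x. exp (phi x))"
      by (rule continuous_on_compose2[OF continuous_on_exp_alg linear_continuous_on[OF bounded_linear_phi] subset_UNIV])
  qed
  then show ?thesis by (simp add: mexp_def[abs_def])
qed

lemma mexp_has_derivative_0: "(mexp has_derivative id) (at 0)"
proof -
  have "((\<lambda>A. psi (exp (phi A))) has_derivative (\<lambda>A. psi (id (phi A)))) (at 0)"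
    apply (rule bounded_linear.has_derivative[OF bounded_linear_psi])
    apply (rule has_derivative_compose[of phi phi, unfolded o_def])
    apply (rule bounded_linear_imp_has_derivative[OF bounded_linear_phi])
    using exp_has_derivative_0 by (metis linear_0 linear_phi)
  then show ?thesis by (simp add: mexp_def[abs_def] id_def)
qed

lemma mexp_vector_derivative_0: "((\<lambda>t. mexp (t *\<^sub>R A)) has_vector_derivative A) (at 0)"
proof -
  have "((\<lambda>t. exp (t *\<^sub>R phi A)) has_vector_derivative exp (0 *\<^sub>R phi A) * phi A) (at 0)"
    by (rule exp_scaleR_has_vector_derivative_right)
  then have d: "((\<lambda>t. exp (t *\<^sub>R phi A)) has_derivative (\<lambda>t. t *\<^sub>R phi A)) (at 0)"
    by (simp add: has_vector_derivative_def)
  have "((\<lambda>t. psi (exp (t *\<^sub>R phi A))) has_derivative (\<lambda>t. psi (t *\<^sub>R phi A))) (at 0)"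
    by (rule bounded_linear.has_derivative[OF bounded_linear_psi d])
  then show ?thesis
    by (simp add: has_vector_derivative_def mexp_def phi_scale psi_scale)
qed

lemma invertible_props:
  fixes A :: "real^'n^'n"
  assumes "invertible A"
  shows "A ** matrix_inv A = mat 1" "matrix_inv A ** A = mat 1"
  using someI_ex[OF assms[unfolded invertible_def]] unfolding matrix_inv_def by auto

lemma matrix_inv_eq:
  fixes A B :: "real^'n^'n"
  assumes "B ** A = mat 1"
  shows "matrix_inv A = B"
proof -
  have inv: "invertible A" using assms invertible_left_inverse by blast
  have "matrix_inv A = (B ** A) ** matrix_inv A" using assms by simp
  also have "\<dots> = B" by (metis inv invertible_props(1) matrix_mul_assoc matrix_mul_rid)
  finally show ?thesis .
qed

lemma mexp_invertible: "invertible (mexp A)"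
  using mexp_inv invertible_left_inverse by blast

lemma matrix_inv_mexp: "matrix_inv (mexp A) = mexp (- A)"
  by (rule matrix_inv_eq) (rule mexp_inv)




lemma mexp_nat_mem:
  assumes mg: "matrix_group G" and A: "mexp A \<in> G"
  shows "mexp (real k *\<^sub>R A) \<in> G"
proof (induction k)
  case 0 then show ?case using mg by (simp add: matrix_group_def)
next
  case (Suc k)
  have "mexp (real (Suc k) *\<^sub>R A) = mexp (real k *\<^sub>R A) ** mexp (1 *\<^sub>R A)"
    using mexp_add_scale[of "real k" 1 A] by (simp add: add.commute)
  then show ?case using Suc A mg by (simp add: matrix_group_def)
qed

lemma mexp_int_mem:
  assumes mg: "matrix_group G" and A: "mexp A \<in> G"
  shows "mexp (of_int m *\<^sub>R A) \<in> G"
proof (cases "m \<ge> 0")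
  case True
  then obtain k where "m = int k" using nonneg_int_cases by blast
  then show ?thesis using mexp_nat_mem[OF mg A, of k] by simp
next
  case False
  then obtain k where k: "m = - int k" by (metis nonneg_int_cases neg_0_le_iff_le linorder_le_cases minus_minus)
  have "mexp (of_int m *\<^sub>R A) = matrix_inv (mexp (real k *\<^sub>R A))"
    by (simp add: k matrix_inv_mexp)
  then show ?thesis using mexp_nat_mem[OF mg A, of k] mg by (simp add: matrix_group_def)
qed

lemma foldr_mat_split:
  "foldr (\<lambda>b M. f b ** M) bs N = foldr (\<lambda>b M. f b ** M) bs (mat 1) ** N"
  by (induction bs) (simp_all add: matrix_mul_assoc)

lemma foldr_mat_mem:
  assumes mg: "matrix_group G" and "\<forall>b\<in>set bs. f b \<in> G"
  shows "foldr (\<lambda>b M. f b ** M) bs (mat 1) \<in> G"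
  using assms(2) by (induction bs) (use mg in \<open>auto simp: matrix_group_def\<close>)

lemma span_inter_zero:
  fixes C :: "'a::real_vector set"
  assumes C: "independent C" "finite C" and BC: "B \<subseteq> C"
    and z1: "z \<in> span B" and z2: "z \<in> span (C - B)"
  shows "z = 0"
proof -
  have fB: "finite B" using BC C finite_subset by blast
  have fCB: "finite (C - B)" using C by simp
  obtain u where u: "z = (\<Sum>v\<in>B. u v *\<^sub>R v)" using z1 span_finite[OF fB] by auto
  obtain w where w: "z = (\<Sum>v\<in>C - B. w v *\<^sub>R v)" using z2 span_finite[OF fCB] by auto
  define f where "f v = (if v \<in> B then u v else - w v)" for v
  have "(\<Sum>v\<in>C. f v *\<^sub>R v) = (\<Sum>v\<in>B. f v *\<^sub>R v) + (\<Sum>v\<in>C - B. f v *\<^sub>R v)"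
    using BC C(2) by (metis sum.subset_diff add.commute)
  also have "\<dots> = z - z"
    using u w by (simp add: f_def sum_negf)
  finally have s0: "(\<Sum>v\<in>C. f v *\<^sub>R v) = 0" by simp
  have fz: "\<forall>v\<in>C. f v = 0"
    using C s0 dependent_finite[OF C(2)] by blast
  have "\<forall>v\<in>B. u v = 0"
  proof
    fix v assume v: "v \<in> B"
    with BC fz have "f v = 0" by blast
    with v show "u v = 0" by (simp add: f_def)
  qed
  then show ?thesis using u by simp
qed

definition Fm :: "('b \<Rightarrow> real^'n^'n \<Rightarrow> real) \<Rightarrow> 'b list \<Rightarrow> ('b \<Rightarrow> real^'n^'n) \<Rightarrow> (real^'n^'n \<Rightarrow> (real^'n) mx) \<Rightarrow> real^'n^'n \<Rightarrow> (real^'n) mx" where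
  "Fm c bs e T X = foldr (\<lambda>b M. exp (c b X *\<^sub>R phi (e b)) * M) bs (T X)"

lemma exp_scale_deriv:
  assumes "linear l"
  shows "((\<lambda>X::real^'n^'n. exp (l X *\<^sub>R (P::(real^'n) mx))) has_derivative (\<lambda>X. l X *\<^sub>R P)) (at 0)"
proof -
  have bl: "bounded_linear l" using assms linear_conv_bounded_linear by blast
  have l0: "l 0 = 0" using assms linear_0 by blast
  have "((\<lambda>t. exp (t *\<^sub>R P)) has_vector_derivative exp (l 0 *\<^sub>R P) * P) (at (l 0))"
    by (rule exp_scaleR_has_vector_derivative_right)
  then have d: "((\<lambda>t. exp (t *\<^sub>R P)) has_derivative (\<lambda>t. t *\<^sub>R P)) (at (l 0))"
    by (simp add: has_vector_derivative_def l0)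
  have "((\<lambda>t. exp (t *\<^sub>R P)) \<circ> l has_derivative (\<lambda>t. t *\<^sub>R P) \<circ> l) (at 0)"
    by (rule diff_chain_at[OF bounded_linear_imp_has_derivative[OF bl] d])
  then show ?thesis by (simp add: o_def)
qed

lemma Fm_deriv:
  assumes lin: "\<And>b. linear (c b)" and T: "(T has_derivative T') (at 0)" and T0: "T 0 = 1"
  shows "(Fm c bs e T has_derivative (\<lambda>X. (\<Sum>b\<leftarrow>bs. c b X *\<^sub>R phi (e b)) + T' X)) (at 0) \<and> Fm c bs e T 0 = 1"
proof (induction bs)
  case Nil then show ?case using T T0 by (simp add: Fm_def)
next
  case (Cons b bs)
  have c0: "c b 0 = 0" using lin linear_0 by blast
  have eq: "Fm c (b # bs) e T = (\<lambda>X. exp (c b X *\<^sub>R phi (e b)) * Fm c bs e T X)"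
    by (simp add: Fm_def fun_eq_iff)
  have "((\<lambda>X. exp (c b X *\<^sub>R phi (e b)) * Fm c bs e T X) has_derivative
        (\<lambda>X. exp (c b 0 *\<^sub>R phi (e b)) * ((\<Sum>b\<leftarrow>bs. c b X *\<^sub>R phi (e b)) + T' X) + (c b X *\<^sub>R phi (e b)) * Fm c bs e T 0)) (at 0)"
    by (rule has_derivative_mult[OF exp_scale_deriv[OF lin] Cons[THEN conjunct1]])
  then have "((\<lambda>X. exp (c b X *\<^sub>R phi (e b)) * Fm c bs e T X) has_derivative
        (\<lambda>X. (\<Sum>b\<leftarrow>b # bs. c b X *\<^sub>R phi (e b)) + T' X)) (at 0)"
    using Cons[THEN conjunct2] c0 by (simp add: algebra_simps)
  then show ?case using eq Cons[THEN conjunct2] c0 by simp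
qed

lemma Fm_cont:
  assumes lin: "\<And>b. linear (c b)" and T: "continuous_on UNIV T"
  shows "continuous_on UNIV (Fm c bs e T)"
proof (induction bs)
  case Nil then show ?case using T by (simp add: Fm_def)
next
  case (Cons b bs)
  have eq: "Fm c (b # bs) e T = (\<lambda>X. exp (c b X *\<^sub>R phi (e b)) * Fm c bs e T X)"
    by (simp add: Fm_def fun_eq_iff)
  have cb: "continuous_on UNIV (c b)"
    using lin linear_continuous_on linear_conv_bounded_linear by blast
  have "continuous_on UNIV (\<lambda>X. exp (c b X *\<^sub>R phi (e b)))"
    by (rule continuous_on_compose2[OF continuous_on_exp_alg _ subset_UNIV])
       (intro continuous_intros cb)
  then show ?case unfolding eq by (intro continuous_on_mult Cons)
qed

lemma psi_Fm:
  "psi (Fm c bs e (\<lambda>X. exp (phi (Q X))) X) = foldr (\<lambda>b M. mexp (c b X *\<^sub>R e b) ** M) bs (mexp (Q X))"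
  by (induction bs) (simp_all add: Fm_def mexp_def psi_mult phi_scale)




lemma phi_zero[simp]: "phi 0 = 0"
  by (rule linear_0[OF linear_phi])

lemma lie_local:
  fixes G :: "(real^'n^'n) set"
  assumes mg: "matrix_group G" and cl: "closed G"
  shows "\<exists>U. open U \<and> mat 1 \<in> U \<and> (\<forall>g\<in>G \<inter> U. \<exists>Ys. set Ys \<subseteq> {X. \<forall>t. mexp (t *\<^sub>R X) \<in> G}
           \<and> g = foldr (\<lambda>Y M. mexp Y ** M) Ys (mat 1))"
proof -
  define L where "L = {X::real^'n^'n. \<forall>t. mexp (t *\<^sub>R X) \<in> G}"
  have Lscale: "c *\<^sub>R X \<in> L" if "X \<in> L" for c X
    using that by (simp add: L_def)
  obtain B where BL: "B \<subseteq> L" and indB: "independent B" and LB: "L \<subseteq> span B"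
    by (rule maximal_independent_subset)
  obtain C where BC: "B \<subseteq> C" and indC: "independent C" and UC: "UNIV \<subseteq> span C"
    by (rule maximal_independent_subset_extend[OF subset_UNIV indB])
  have fC: "finite C" using indC finiteI_independent by blast
  have fB: "finite B" using BC fC finite_subset by blast
  obtain bs where bs: "set bs = B" "distinct bs" using fB finite_distinct_list by blast
  define rp where "rp X b = real_vector.representation C X b" for X b
  have spanC: "X \<in> span C" for X using UC by blast
  have lin_rp: "linear (\<lambda>X. rp X b)" for b
    by (rule linearI) (simp_all add: rp_def representation_add[OF indC spanC spanC] representation_scale[OF indC spanC])
  define Q where "Q X = (\<Sum>m\<in>C - B. rp X m *\<^sub>R m)" for X
  have lin_Q: "linear Q"
  proof (rule linearI)
    fix X Y :: "real^'n^'n" and c :: real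
    show "Q (X + Y) = Q X + Q Y"
      unfolding Q_def by (simp add: linear_add[OF lin_rp] scaleR_add_left sum.distrib)
    show "Q (c *\<^sub>R X) = c *\<^sub>R Q X"
      unfolding Q_def by (simp add: linear_scale[OF lin_rp] scaleR_sum_right)
  qed
  have decomp: "X = (\<Sum>b\<in>B. rp X b *\<^sub>R b) + Q X" for X
  proof -
    have "X = (\<Sum>b\<in>C. rp X b *\<^sub>R b)"
      unfolding rp_def by (rule sum_representation_eq[OF indC spanC fC order_refl, symmetric])
    also have "\<dots> = (\<Sum>b\<in>B. rp X b *\<^sub>R b) + Q X"
      unfolding Q_def by (simp add: sum.subset_diff[OF BC fC] add.commute)
    finally show ?thesis .
  qed
  define Phi where "Phi X = psi (Fm (\<lambda>b X. rp X b) bs (\<lambda>b. b) (\<lambda>X. exp (phi (Q X))) X)" for X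
  have Phi_mat: "Phi X = foldr (\<lambda>b M. mexp (rp X b *\<^sub>R b) ** M) bs (mexp (Q X))" for X
    unfolding Phi_def by (rule psi_Fm)
  have Q0: "Q 0 = 0" using lin_Q linear_0 by blast
  have blpQ: "bounded_linear (\<lambda>X. phi (Q X))"
  proof -
    have "linear (\<lambda>X. phi (Q X))" using linear_compose[OF lin_Q linear_phi] by (simp add: o_def)
    then show ?thesis by (metis linear_conv_bounded_linear)
  qed
  have T_der: "((\<lambda>X. exp (phi (Q X))) has_derivative (\<lambda>X. phi (Q X))) (at 0)"
  proof -
    have e0: "(exp has_derivative id) (at (phi (Q 0)))"
    proof -
      have z: "phi (Q 0) = 0" using Q0 by simp
      show ?thesis unfolding z by (rule exp_has_derivative_0)
    qed
    have "(exp \<circ> (\<lambda>X. phi (Q X)) has_derivative id \<circ> (\<lambda>X. phi (Q X))) (at 0)"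
      by (rule diff_chain_at[OF bounded_linear_imp_has_derivative[OF blpQ] e0])
    then show ?thesis by (simp add: o_def)
  qed
  have T0: "exp (phi (Q 0)) = 1" using Q0 by simp
  have Fd: "(Fm (\<lambda>b X. rp X b) bs (\<lambda>b. b) (\<lambda>X. exp (phi (Q X))) has_derivative
              (\<lambda>X. (\<Sum>b\<leftarrow>bs. rp X b *\<^sub>R phi b) + phi (Q X))) (at 0)
         \<and> Fm (\<lambda>b X. rp X b) bs (\<lambda>b. b) (\<lambda>X. exp (phi (Q X))) 0 = 1"
    by (rule Fm_deriv[OF lin_rp T_der T0])
  have sum_bs: "(\<Sum>b\<leftarrow>bs. rp X b *\<^sub>R phi b) = phi (\<Sum>b\<in>B. rp X b *\<^sub>R b)" for X
  proof -
    have "(\<Sum>b\<leftarrow>bs. rp X b *\<^sub>R phi b) = (\<Sum>b\<in>B. rp X b *\<^sub>R phi b)"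
      using bs by (simp add: sum_list_distinct_conv_sum_set)
    also have "\<dots> = phi (\<Sum>b\<in>B. rp X b *\<^sub>R b)"
      by (simp add: linear_sum[OF linear_phi] phi_scale)
    finally show ?thesis .
  qed
  have Phi_der: "(Phi has_derivative id) (at 0)"
  proof -
    have "(Phi has_derivative (\<lambda>X. psi ((\<Sum>b\<leftarrow>bs. rp X b *\<^sub>R phi b) + phi (Q X)))) (at 0)"
      unfolding Phi_def by (rule bounded_linear.has_derivative[OF bounded_linear_psi Fd[THEN conjunct1]])
    moreover have "psi ((\<Sum>b\<leftarrow>bs. rp X b *\<^sub>R phi b) + phi (Q X)) = X" for X
      by (metis sum_bs phi_add psi_phi decomp)
    ultimately show ?thesis by (simp add: id_def)
  qed
  have Phi0: "Phi 0 = mat 1"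
    unfolding Phi_def using Fd psi_one by simp
  have Phi_cont: "continuous_on UNIV Phi"
  proof -
    have cT: "continuous_on UNIV (\<lambda>X. exp (phi (Q X)))"
      by (rule continuous_on_compose2[OF continuous_on_exp_alg _ subset_UNIV])
         (rule linear_continuous_on[OF blpQ])
    show ?thesis unfolding Phi_def[abs_def]
      by (rule continuous_on_compose2[OF linear_continuous_on[OF bounded_linear_psi] Fm_cont[OF lin_rp cT] subset_UNIV])
  qed
  have claim: "\<exists>r>0. \<forall>X. norm X < r \<longrightarrow> Phi X \<in> G \<longrightarrow> Q X = 0"
  proof (rule ccontr)
    assume "\<not> ?thesis"
    then have "\<forall>k::nat. \<exists>X. norm X < 1 / (real k + 1) \<and> Phi X \<in> G \<and> Q X \<noteq> 0"
      by (metis divide_pos_pos of_nat_0_le_iff zero_less_one add_nonneg_pos)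
    then obtain Xs where Xs: "\<And>k. norm (Xs k) < 1 / (real k + 1)" "\<And>k. Phi (Xs k) \<in> G" "\<And>k. Q (Xs k) \<noteq> 0"
      by metis
    have Xs0: "Xs \<longlonglongrightarrow> 0"
    proof (rule tendsto_norm_zero_cancel, rule Lim_null_comparison)
      show "\<forall>\<^sub>F k in sequentially. norm (norm (Xs k)) \<le> 1 / (real k + 1)"
        using Xs(1) by (simp add: less_imp_le)
      show "(\<lambda>k. 1 / (real k + 1)) \<longlonglongrightarrow> 0" using LIMSEQ_inverse_real_of_nat by (simp add: inverse_eq_divide add.commute)
    qed
    define Z where "Z k = Q (Xs k)" for k
    have blQ: "bounded_linear Q" using lin_Q linear_conv_bounded_linear by blast
    have Z0: "Z \<longlonglongrightarrow> 0"
      unfolding Z_def using bounded_linear.tendsto[OF blQ Xs0] Q0 by simp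
    have ZG: "mexp (Z k) \<in> G" for k
    proof -
      define P where "P = foldr (\<lambda>b M. mexp (rp (Xs k) b *\<^sub>R b) ** M) bs (mat 1)"
      have PG: "P \<in> G" unfolding P_def
        by (rule foldr_mat_mem[OF mg]) (use bs BL in \<open>auto simp: L_def\<close>)
      have PhiP: "Phi (Xs k) = P ** mexp (Z k)"
        unfolding Phi_mat P_def Z_def by (rule foldr_mat_split)
      have inv: "invertible P" using PG mg by (auto simp: matrix_group_def)
      have "mexp (Z k) = matrix_inv P ** Phi (Xs k)"
        by (metis PhiP invertible_props(2)[OF inv] matrix_mul_assoc matrix_mul_lid)
      then show ?thesis using PG Xs(2) mg by (simp add: matrix_group_def)
    qed
    have Znz: "Z k \<noteq> 0" for k using Xs(3) Z_def by simp
    have Zspan: "Z k \<in> span (C - B)" for k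
      unfolding Z_def Q_def by (intro span_sum span_scale span_base) auto
    define Y where "Y k = Z k /\<^sub>R norm (Z k)" for k
    have Ysph: "Y k \<in> sphere 0 1" for k using Znz by (simp add: Y_def)
    obtain Z1 \<sigma> where Z1: "Z1 \<in> sphere 0 1" and \<sigma>: "strict_mono \<sigma>" and Ylim: "(Y \<circ> \<sigma>) \<longlonglongrightarrow> Z1"
      using compact_imp_seq_compact[OF compact_sphere[of "0::real^'n^'n" 1]] Ysph
      by (metis seq_compactE)
    have Z1span: "Z1 \<in> span (C - B)"
    proof (rule closed_sequentially[OF closed_subspace[OF subspace_span] _ Ylim])
      show "(Y \<circ> \<sigma>) k \<in> span (C - B)" for k
        using Zspan by (simp add: Y_def span_scale)
    qed
    have "\<forall>t. mexp (t *\<^sub>R Z1) \<in> G"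
    proof
      fix t :: real
      define n where "n k = norm (Z (\<sigma> k))" for k
      define m where "m k = floor (t / n k)" for k
      have npos: "n k > 0" for k using Znz by (simp add: n_def)
      have nlim: "n \<longlonglongrightarrow> 0"
        unfolding n_def using tendsto_norm_zero[OF LIMSEQ_subseq_LIMSEQ[OF Z0 \<sigma>]] by (simp add: o_def)
      have mn: "\<bar>of_int (m k) * n k - t\<bar> \<le> n k" for k
      proof -
        have a: "of_int (m k) \<le> t / n k" "t / n k < of_int (m k) + 1"
          unfolding m_def by (simp_all add: floor_le_iff)
        have b: "of_int (m k) * n k \<le> t" using a(1) npos[of k] by (simp add: le_divide_eq)
        have c: "t < (of_int (m k) + 1) * n k" using a(2) npos[of k] by (simp add: divide_less_eq)
        show ?thesis using b c by (simp add: algebra_simps abs_if)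
      qed
      have mlim: "(\<lambda>k. of_int (m k) * n k) \<longlonglongrightarrow> t"
      proof -
        have "(\<lambda>k. of_int (m k) * n k - t) \<longlonglongrightarrow> 0"
        proof (rule Lim_null_comparison[OF _ nlim])
          show "\<forall>\<^sub>F k in sequentially. norm (of_int (m k) * n k - t) \<le> n k"
            using mn by simp
        qed
        then show ?thesis by (simp add: LIM_zero_iff)
      qed
      define W where "W k = of_int (m k) *\<^sub>R Z (\<sigma> k)" for k
      have WG: "mexp (W k) \<in> G" for k unfolding W_def by (rule mexp_int_mem[OF mg ZG])
      have Weq: "W k = (of_int (m k) * n k) *\<^sub>R (Y \<circ> \<sigma>) k" for k
        using npos[of k] by (simp add: W_def Y_def n_def)
      have Wlim: "W \<longlonglongrightarrow> t *\<^sub>R Z1"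
        unfolding Weq[abs_def] by (intro tendsto_scaleR mlim Ylim)
      have "(\<lambda>k. mexp (W k)) \<longlonglongrightarrow> mexp (t *\<^sub>R Z1)"
        by (rule continuous_on_tendsto_compose[OF continuous_mexp[of UNIV] Wlim]) auto
      then show "mexp (t *\<^sub>R Z1) \<in> G"
        by (rule closed_sequentially[of G "\<lambda>k. mexp (W k)", OF cl WG])
    qed
    then have Z1L: "Z1 \<in> L" by (simp add: L_def)
    then have "Z1 \<in> span B" using LB by blast
    then have "Z1 = 0" using span_inter_zero[OF indC fC BC _ Z1span] by blast
    then show False using Z1 by simp
  qed
  then obtain r where r: "r > 0" "\<And>X. norm X < r \<Longrightarrow> Phi X \<in> G \<Longrightarrow> Q X = 0" by blast
  have "Phi 0 \<in> interior (Phi ` ball 0 r)"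
    by (rule sussmann_open_mapping[OF open_UNIV Phi_cont UNIV_I Phi_der, of id])
       (use r in \<open>auto simp: bounded_linear_ident id_def\<close>)
  then have one_in: "mat 1 \<in> interior (Phi ` ball 0 r)" using Phi0 by simp
  show ?thesis
  proof (rule exI[of _ "interior (Phi ` ball 0 r)"], intro conjI)
    show "open (interior (Phi ` ball 0 r))" by simp
    show "mat 1 \<in> interior (Phi ` ball 0 r)" by (rule one_in)
    show "\<forall>g\<in>G \<inter> interior (Phi ` ball 0 r). \<exists>Ys. set Ys \<subseteq> {X. \<forall>t. mexp (t *\<^sub>R X) \<in> G} \<and> g = foldr (\<lambda>Y M. mexp Y ** M) Ys (mat 1)"
    proof
    fix g assume g: "g \<in> G \<inter> interior (Phi ` ball 0 r)"
    then obtain X where X: "norm X < r" "g = Phi X" using interior_subset by fastforce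
    then have QX: "Q X = 0" using r g by auto
    have "g = foldr (\<lambda>b M. mexp (rp X b *\<^sub>R b) ** M) bs (mat 1)"
      using X QX by (simp add: Phi_mat)
    also have "\<dots> = foldr (\<lambda>Y M. mexp Y ** M) (map (\<lambda>b. rp X b *\<^sub>R b) bs) (mat 1)"
      by (simp add: foldr_map o_def)
    finally show "\<exists>Ys. set Ys \<subseteq> {X. \<forall>t. mexp (t *\<^sub>R X) \<in> G} \<and> g = foldr (\<lambda>Y M. mexp Y ** M) Ys (mat 1)"
      using bs BL Lscale unfolding L_def[symmetric] by (intro exI[of _ "map (\<lambda>b. rp X b *\<^sub>R b) bs"]) auto
    qed
  qed
qed




lemma shift_interval_integral:
  fixes f :: "real \<Rightarrow> 'a::euclidean_space"
  assumes "(f has_integral i) {t..t + e}"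
  shows "((\<lambda>s. f (s + t)) has_integral i) {0..e}"
proof -
  have "((\<lambda>x. f (1 *\<^sub>R x + t)) has_integral (1 / (\<bar>1\<bar> ^ DIM(real))) *\<^sub>R i) ((\<lambda>x. (1 / 1) *\<^sub>R x + -((1 / 1) *\<^sub>R t)) ` cbox t (t + e))"
    by (rule has_integral_affinity) (use assms in auto)
  moreover have "(\<lambda>x. (1 / 1) *\<^sub>R x + -((1 / 1) *\<^sub>R t)) ` cbox t (t + e) = {0..e}"
  proof -
    have "(\<lambda>x::real. x + - t) ` {t..t + e} = {0..e}"
      by (auto simp: image_iff intro!: bexI[where x="_ + t"])
    then show ?thesis by simp
  qed
  ultimately show ?thesis by simp
qed

lemma oneparam_deriv:
  fixes \<pi> :: "real^'n^'n \<Rightarrow> 'v::euclidean_space \<Rightarrow> 'v"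
  assumes rep: "representation G \<pi>" and hX: "\<forall>t. mexp (t *\<^sub>R X) \<in> G"
  shows "\<exists>B. linear B \<and> (\<forall>u. ((\<lambda>t. \<pi> (mexp (t *\<^sub>R X)) u) has_vector_derivative B u) (at 0))"
proof -
  define \<phi> where "\<phi> t = \<pi> (mexp (t *\<^sub>R X))" for t
  have lin\<phi>: "linear (\<phi> t)" for t using rep hX by (simp add: representation_def \<phi>_def)
  have bl\<phi>: "bounded_linear (\<phi> t)" for t using lin\<phi> linear_conv_bounded_linear by blast
  have \<phi>0: "\<phi> 0 = id" using rep by (simp add: representation_def \<phi>_def)
  have \<phi>add: "\<phi> (s + t) = \<phi> s \<circ> \<phi> t" for s t
    using rep hX mexp_add_scale[of s t X] by (simp add: representation_def \<phi>_def)
  have cont: "continuous_on UNIV (\<lambda>t. \<phi> t w)" for w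
  proof -
    have c1: "continuous_on UNIV (\<lambda>t::real. mexp (t *\<^sub>R X))"
      by (rule continuous_on_compose2[OF continuous_mexp[of UNIV] _ subset_UNIV]) (intro continuous_intros)
    have c2: "continuous_on G (\<lambda>x. \<pi> x w)" using rep by (simp add: representation_def)
    show ?thesis unfolding \<phi>_def by (rule continuous_on_compose2[OF c2 c1]) (use hX in auto)
  qed
  define h where "h s = (\<Sum>b\<in>Basis. norm (\<phi> s b - b))" for s
  have hc: "continuous_on UNIV h" unfolding h_def
    by (intro continuous_intros cont)
  have h0: "h 0 = 0" by (simp add: h_def \<phi>0)
  obtain d where d: "d > 0" "\<And>s. \<bar>s\<bar> < d \<Longrightarrow> h s < 1/2"
  proof -
    have "isCont h 0" using hc continuous_on_eq_continuous_at by blast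
    then obtain d where "d > 0" "\<forall>s. dist s 0 < d \<longrightarrow> dist (h s) (h 0) < 1/2"
      unfolding continuous_at_eps_delta by (metis zero_less_divide_1_iff zero_less_numeral)
    then have "\<And>s. \<bar>s\<bar> < d \<Longrightarrow> h s < 1/2" using h0 by (auto simp: dist_real_def)
    then show ?thesis using that \<open>d > 0\<close> by blast
  qed
  define e where "e = min (d/2) 1"
  have e: "e > 0" "e \<le> 1" "e < d" using d by (auto simp: e_def)
  have bound: "norm (\<phi> s w - w) \<le> norm w * h s" for s w
  proof -
    have "\<phi> s w - w = (\<Sum>b\<in>Basis. (w \<bullet> b) *\<^sub>R (\<phi> s b - b))"
    proof -
      have "\<phi> s w = \<phi> s (\<Sum>b\<in>Basis. (w \<bullet> b) *\<^sub>R b)" by (simp add: euclidean_representation)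
      also have "\<dots> = (\<Sum>b\<in>Basis. (w \<bullet> b) *\<^sub>R \<phi> s b)"
        by (simp add: linear_sum[OF lin\<phi>] linear_scale[OF lin\<phi>])
      finally show ?thesis
        by (simp add: scaleR_diff_right sum_subtractf euclidean_representation)
    qed
    also have "norm \<dots> \<le> (\<Sum>b\<in>Basis. norm ((w \<bullet> b) *\<^sub>R (\<phi> s b - b)))" by (rule norm_sum)
    also have "\<dots> \<le> (\<Sum>b\<in>Basis. norm w * norm (\<phi> s b - b))"
      by (intro sum_mono) (simp add: Basis_le_norm mult_right_mono)
    also have "\<dots> = norm w * h s" by (simp add: h_def sum_distrib_left)
    finally show ?thesis .
  qed
  define A where "A w = integral {0..e} (\<lambda>s. \<phi> s w)" for w
  have intg: "(\<lambda>s. \<phi> s w) integrable_on {a..b}" for w a b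
    by (rule integrable_continuous_interval) (rule continuous_on_subset[OF cont subset_UNIV])
  have linA: "linear A"
  proof (rule linearI)
    fix w1 w2 :: 'v and c :: real
    show "A (w1 + w2) = A w1 + A w2"
      unfolding A_def by (simp add: linear_add[OF lin\<phi>] integral_add intg)
    show "A (c *\<^sub>R w1) = c *\<^sub>R A w1"
      unfolding A_def by (simp add: linear_scale[OF lin\<phi>])
  qed
  have injA: "inj A"
  proof (rule linear_injective_0[OF linA, THEN iffD2], intro allI impI)
    fix w assume Aw: "A w = 0"
    have "((\<lambda>s. \<phi> s w - w) has_integral (A w - e *\<^sub>R w)) (cbox 0 e)"
    proof -
      have i1: "((\<lambda>s. \<phi> s w) has_integral A w) {0..e}" unfolding A_def using intg by (rule integrable_integral)
      have i2: "((\<lambda>s. w) has_integral (e *\<^sub>R w)) {0..e}"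
        using has_integral_const_real[of w 0 e] e by simp
      show ?thesis using has_integral_diff[OF i1 i2] by (simp add: cbox_interval)
    qed
    then have "norm (A w - e *\<^sub>R w) \<le> (norm w * (1/2)) * measure lborel (cbox 0 e)"
    proof (rule has_integral_bound[rotated])
      show "0 \<le> norm w * (1/2)" by simp
      fix s assume "s \<in> cbox 0 e"
      then have "\<bar>s\<bar> < d" using e by auto
      then have "h s < 1/2" by (rule d(2))
      then show "norm (\<phi> s w - w) \<le> norm w * (1/2)"
        using bound[of s w] by (meson mult_left_mono norm_ge_zero order_trans less_imp_le)
    qed
    then have "e * norm w \<le> norm w * (1/2) * e" using Aw e by simp
    then have "norm w \<le> norm w * (1/2)" using e by (simp add: mult.commute)
    then show "w = 0" by simp
  qed
  have surjA: "surj A" using linear_inj_imp_surj[OF linA injA] by blast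
  obtain g where g: "linear g" "A \<circ> g = id"
    using linear_surjective_right_inverse[OF linA surjA] by blast
  define B where "B u = \<phi> e (g u) - g u" for u
  have linB: "linear B"
    unfolding B_def[abs_def] by (intro linear_compose_sub linear_compose[OF g(1) lin\<phi>, unfolded o_def] g(1))
  show ?thesis
  proof (intro exI conjI allI)
    show "linear B" by (rule linB)
    fix u
    define w where "w = g u"
    have Aw: "A w = u" using g(2) by (simp add: w_def pointfree_idE)
    define \<Psi> where "\<Psi> x = integral {-2..x} (\<lambda>s. \<phi> s w)" for x
    have eq: "\<phi> t u = \<Psi> (t + e) - \<Psi> t" if t: "t \<in> ball 0 1" for t
    proof -
      have t1: "-2 \<le> t" "t \<le> t + e" using t e by (auto simp: dist_real_def)
      have "integral {-2..t} (\<lambda>s. \<phi> s w) + integral {t..t+e} (\<lambda>s. \<phi> s w) = integral {-2..t+e} (\<lambda>s. \<phi> s w)"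
        by (rule Henstock_Kurzweil_Integration.integral_combine[OF t1 intg])
      then have i1: "((\<lambda>s. \<phi> s w) has_integral (\<Psi> (t + e) - \<Psi> t)) {t..t+e}"
        unfolding \<Psi>_def using integrable_integral[OF intg] by (metis add_diff_cancel_left')
      have i2: "((\<lambda>s. \<phi> (s + t) w) has_integral (\<Psi> (t + e) - \<Psi> t)) {0..e}"
        by (rule shift_interval_integral[OF i1])
      have "\<phi> t u = \<phi> t (integral {0..e} (\<lambda>s. \<phi> s w))" using Aw A_def by simp
      also have "\<dots> = integral {0..e} (\<phi> t \<circ> (\<lambda>s. \<phi> s w))"
        by (rule integral_linear[OF intg bl\<phi>, symmetric])
      also have "\<dots> = integral {0..e} (\<lambda>s. \<phi> (s + t) w)"
      proof -
        have "\<And>s. \<phi> t (\<phi> s w) = \<phi> (s + t) w" by (metis \<phi>add add.commute comp_apply)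
        then show ?thesis by (simp add: o_def)
      qed
      also have "\<dots> = \<Psi> (t + e) - \<Psi> t" using i2 by (rule integral_unique)
      finally show ?thesis .
    qed
    have dPsi: "(\<Psi> has_vector_derivative \<phi> x w) (at x)" if "x \<in> {-1..2-1}" for x
    proof -
      have "(\<Psi> has_vector_derivative \<phi> x w) (at x within {-2..2})"
        unfolding \<Psi>_def by (rule integral_has_vector_derivative[OF continuous_on_subset[OF cont subset_UNIV]]) (use that in auto)
      moreover have "x \<in> interior {-2..2::real}" using that by auto
      ultimately show ?thesis using at_within_interior by metis
    qed
    have d1: "((\<lambda>t. \<Psi> (t + e)) has_vector_derivative \<phi> e w) (at 0)"
    proof -
      have dP: "(\<Psi> has_vector_derivative \<phi> e w) (at ((\<lambda>t. t + e) 0))" using dPsi[of e] e by simp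
      have dl: "((\<lambda>t. t + e) has_vector_derivative 1) (at (0::real))"
        unfolding has_vector_derivative_def by (auto intro!: derivative_eq_intros)
      show ?thesis using vector_diff_chain_at[OF dl dP] by (simp add: o_def)
    qed
    have d2: "(\<Psi> has_vector_derivative \<phi> 0 w) (at 0)" using dPsi[of 0] by simp
    have "((\<lambda>t. \<Psi> (t + e) - \<Psi> t) has_vector_derivative \<phi> e w - \<phi> 0 w) (at 0)"
      by (rule has_vector_derivative_diff[OF d1 d2])
    then have "((\<lambda>t. \<phi> t u) has_vector_derivative \<phi> e w - \<phi> 0 w) (at 0)"
      by (rule has_vector_derivative_transform_within_open[where S="ball 0 1"]) (use eq in auto)
    then show "((\<lambda>t. \<pi> (mexp (t *\<^sub>R X)) u) has_vector_derivative B u) (at 0)"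
      by (simp add: B_def w_def \<phi>0 \<phi>_def[symmetric])
  qed
qed




lemma vd_iff:
  fixes f :: "real \<Rightarrow> 'a::real_normed_vector"
  shows "(f has_vector_derivative f') (at 0) \<longleftrightarrow> ((\<lambda>t. (f t - f 0) /\<^sub>R t) \<longlongrightarrow> f') (at 0)"
proof -
  have ev: "\<forall>\<^sub>F t in at (0::real). norm (((f t - f 0) - (t - 0) *\<^sub>R f') /\<^sub>R norm (t - 0)) = norm ((f t - f 0) /\<^sub>R t - f')"
    unfolding eventually_at_filter
  proof (intro always_eventually allI impI)
    fix t :: real assume "t \<noteq> 0"
    then have e1: "(f t - f 0) /\<^sub>R t - f' = (1 / t) *\<^sub>R ((f t - f 0) - t *\<^sub>R f')"
      by (simp add: scaleR_diff_right inverse_eq_divide)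
    have "norm (((f t - f 0) - (t - 0) *\<^sub>R f') /\<^sub>R norm (t - 0)) = norm ((f t - f 0) - t *\<^sub>R f') / \<bar>t\<bar>"
      by (simp add: divide_inverse_commute)
    also have "\<dots> = norm ((f t - f 0) /\<^sub>R t - f')"
      unfolding e1 by (simp add: divide_inverse_commute)
    finally show "norm (((f t - f 0) - (t - 0) *\<^sub>R f') /\<^sub>R norm (t - 0)) = norm ((f t - f 0) /\<^sub>R t - f')" .
  qed
  have "(f has_vector_derivative f') (at 0) \<longleftrightarrow> ((\<lambda>t. ((f t - f 0) - (t - 0) *\<^sub>R f') /\<^sub>R norm (t - 0)) \<longlongrightarrow> 0) (at 0)"
    unfolding has_vector_derivative_def has_derivative_at_within by (simp add: bounded_linear_scaleR_left)
  also have "\<dots> \<longleftrightarrow> ((\<lambda>t. norm (((f t - f 0) - (t - 0) *\<^sub>R f') /\<^sub>R norm (t - 0))) \<longlongrightarrow> 0) (at 0)"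
    by (rule tendsto_norm_zero_iff[symmetric])
  also have "\<dots> \<longleftrightarrow> ((\<lambda>t. norm ((f t - f 0) /\<^sub>R t - f')) \<longlongrightarrow> 0) (at 0)"
    by (rule tendsto_cong[OF ev])
  also have "\<dots> \<longleftrightarrow> ((\<lambda>t. (f t - f 0) /\<^sub>R t - f') \<longlongrightarrow> 0) (at 0)"
    by (rule tendsto_norm_zero_iff)
  also have "\<dots> \<longleftrightarrow> ((\<lambda>t. (f t - f 0) /\<^sub>R t) \<longlongrightarrow> f') (at 0)"
    by (rule LIM_zero_iff)
  finally show ?thesis .
qed

lemma rep_linear: "representation G \<pi> \<Longrightarrow> x \<in> G \<Longrightarrow> linear (\<pi> x)"
  unfolding representation_def by (elim conjE) (erule bspec)
lemma rep_id: "representation G \<pi> \<Longrightarrow> \<pi> (mat 1) = id"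
  unfolding representation_def by (elim conjE)
lemma rep_mult: "representation G \<pi> \<Longrightarrow> x \<in> G \<Longrightarrow> y \<in> G \<Longrightarrow> \<pi> (x ** y) = \<pi> x \<circ> \<pi> y"
  unfolding representation_def by (elim conjE) (simp only:)
lemma rep_cont: "representation G \<pi> \<Longrightarrow> continuous_on G (\<lambda>x. \<pi> x v)"
  unfolding representation_def by (elim conjE) (erule allE)

lemma rep_expand:
  assumes "representation G \<pi>" "x \<in> G"
  shows "\<pi> x y = (\<Sum>b\<in>Basis. (y \<bullet> b) *\<^sub>R \<pi> x b)"
proof -
  have "\<pi> x y = \<pi> x (\<Sum>b\<in>Basis. (y \<bullet> b) *\<^sub>R b)" by (simp add: euclidean_representation)
  also have "\<dots> = (\<Sum>b\<in>Basis. (y \<bullet> b) *\<^sub>R \<pi> x b)"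
    by (simp add: linear_sum[OF rep_linear[OF assms]] linear_scale[OF rep_linear[OF assms]])
  finally show ?thesis .
qed

lemma rep_joint_tendsto:
  fixes \<pi> :: "real^'n^'n \<Rightarrow> 'v::euclidean_space \<Rightarrow> 'v"
  assumes rep: "representation G \<pi>" and g: "(g \<longlongrightarrow> x) F" and xG: "x \<in> G"
    and ev: "\<forall>\<^sub>F i in F. g i \<in> G" and y: "(y \<longlongrightarrow> y0) F"
  shows "((\<lambda>i. \<pi> (g i) (y i)) \<longlongrightarrow> \<pi> x y0) F"
proof -
  have cb: "((\<lambda>i. \<pi> (g i) b) \<longlongrightarrow> \<pi> x b) F" for b
    by (rule continuous_on_tendsto_compose[OF _ g xG ev]) (rule rep_cont[OF rep])
  have lim1: "((\<lambda>i. \<Sum>b\<in>Basis. (y i \<bullet> b) *\<^sub>R \<pi> (g i) b) \<longlongrightarrow> (\<Sum>b\<in>Basis. (y0 \<bullet> b) *\<^sub>R \<pi> x b)) F"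
  proof (rule tendsto_sum)
    fix b :: 'v assume "b \<in> Basis"
    show "((\<lambda>i. (y i \<bullet> b) *\<^sub>R \<pi> (g i) b) \<longlongrightarrow> (y0 \<bullet> b) *\<^sub>R \<pi> x b) F"
      by (rule tendsto_scaleR[OF tendsto_inner[OF y tendsto_const] cb])
  qed
  have e0: "\<pi> x y0 = (\<Sum>b\<in>Basis. (y0 \<bullet> b) *\<^sub>R \<pi> x b)" by (rule rep_expand[OF rep xG])
  have "((\<lambda>i. \<Sum>b\<in>Basis. (y i \<bullet> b) *\<^sub>R \<pi> (g i) b) \<longlongrightarrow> \<pi> x y0) F"
    unfolding e0 by (rule lim1)
  then show ?thesis
  proof (rule Lim_transform_eventually)
    show "\<forall>\<^sub>F i in F. (\<Sum>b\<in>Basis. (y i \<bullet> b) *\<^sub>R \<pi> (g i) b) = \<pi> (g i) (y i)"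
      using ev
    proof (rule eventually_mono)
      fix i assume "g i \<in> G"
      then show "(\<Sum>b\<in>Basis. (y i \<bullet> b) *\<^sub>R \<pi> (g i) b) = \<pi> (g i) (y i)"
        by (rule rep_expand[OF rep, symmetric])
    qed
  qed
qed

lemma rep_apply_deriv:
  assumes rep: "representation G \<pi>" and g: "(g \<longlongrightarrow> x) (at 0)" and xG: "x \<in> G"
    and gG: "\<forall>t. g t \<in> G" and u0: "u 0 = 0" and u: "(u has_vector_derivative d) (at 0)"
  shows "((\<lambda>t. \<pi> (g t) (u t)) has_vector_derivative \<pi> x d) (at 0)"
  unfolding vd_iff
proof -
  have uq: "((\<lambda>t. (u t - u 0) /\<^sub>R t) \<longlongrightarrow> d) (at 0)" by (rule vd_iff[THEN iffD1, OF u])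
  have lim: "((\<lambda>t. \<pi> (g t) ((u t - u 0) /\<^sub>R t)) \<longlongrightarrow> \<pi> x d) (at 0)"
    by (rule rep_joint_tendsto[OF rep g xG _ uq]) (use gG in auto)
  have eqt: "\<pi> (g t) ((u t - u 0) /\<^sub>R t) = (\<pi> (g t) (u t) - \<pi> (g 0) (u 0)) /\<^sub>R t" for t
  proof -
    have l1: "linear (\<pi> (g t))" by (rule rep_linear[OF rep gG[rule_format]])
    have l0: "linear (\<pi> (g 0))" by (rule rep_linear[OF rep gG[rule_format]])
    have z: "\<pi> (g 0) 0 = 0" by (rule linear_0[OF l0])
    show ?thesis unfolding u0 z diff_zero by (rule linear_scale[OF l1])
  qed
  show "((\<lambda>t. (\<pi> (g t) (u t) - \<pi> (g 0) (u 0)) /\<^sub>R t) \<longlongrightarrow> \<pi> x d) (at 0)"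
    using lim by (simp only: eqt)
qed

lemma bounded_linear_mat_right:
  fixes A :: "real^'n^'n"
  shows "bounded_linear (\<lambda>M::real^'n^'n. M ** A)"
proof -
  have "(\<lambda>M::real^'n^'n. M ** A) = (\<lambda>M. psi (phi M * phi A))" by (simp add: psi_mult)
  moreover have "bounded_linear (\<lambda>M::real^'n^'n. psi (phi M * phi A))"
    by (rule bounded_linear_compose[OF bounded_linear_psi bounded_linear_compose[OF bounded_linear_mult_left bounded_linear_phi]])
  ultimately show ?thesis by simp
qed

lemma mat_prod_vd:
  fixes \<gamma>1 \<gamma>2 :: "real \<Rightarrow> real^'n^'n"
  assumes "(\<gamma>1 has_vector_derivative X1) (at 0)" "(\<gamma>2 has_vector_derivative X2) (at 0)"
  shows "\<exists>X. ((\<lambda>t. \<gamma>1 t ** M ** \<gamma>2 t) has_vector_derivative X) (at 0)"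
proof -
  have d1: "((\<lambda>t. phi (\<gamma>1 t ** M)) has_vector_derivative phi (X1 ** M)) (at 0)"
    by (rule bounded_linear.has_vector_derivative[OF bounded_linear_phi
          bounded_linear.has_vector_derivative[OF bounded_linear_mat_right assms(1)]])
  have d2: "((\<lambda>t. phi (\<gamma>2 t)) has_vector_derivative phi X2) (at 0)"
    by (rule bounded_linear.has_vector_derivative[OF bounded_linear_phi assms(2)])
  have "((\<lambda>t. phi (\<gamma>1 t ** M) * phi (\<gamma>2 t)) has_vector_derivative
     (phi (\<gamma>1 0 ** M) * phi X2 + phi (X1 ** M) * phi (\<gamma>2 0))) (at 0)"
    by (rule has_vector_derivative_mult[OF d1 d2])
  then have "((\<lambda>t. psi (phi (\<gamma>1 t ** M) * phi (\<gamma>2 t))) has_vector_derivative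
     psi (phi (\<gamma>1 0 ** M) * phi X2 + phi (X1 ** M) * phi (\<gamma>2 0))) (at 0)"
    by (rule bounded_linear.has_vector_derivative[OF bounded_linear_psi])
  moreover have "(\<lambda>t. psi (phi (\<gamma>1 t ** M) * phi (\<gamma>2 t))) = (\<lambda>t. \<gamma>1 t ** M ** \<gamma>2 t)"
    by (simp add: psi_mult)
  ultimately show ?thesis by (intro exI) simp
qed

lemma diff_image_subspace:
  fixes \<pi> :: "real^'n^'n \<Rightarrow> 'v::euclidean_space \<Rightarrow> 'v"
  assumes mg: "matrix_group G" and rep: "representation G \<pi>" and xG: "x \<in> G"
  shows "subspace (diff_image G (\<lambda>g. \<pi> g v) x)"
  unfolding subspace_def
proof (intro conjI ballI allI)
  show "0 \<in> diff_image G (\<lambda>g. \<pi> g v) x"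
    unfolding diff_image_def using xG
    by (intro CollectI exI[of _ "\<lambda>t. x"] exI[of _ 0]) auto
next
  fix c :: real and w assume "w \<in> diff_image G (\<lambda>g. \<pi> g v) x"
  then obtain \<gamma> X where h: "\<forall>t. \<gamma> t \<in> G" "\<gamma> 0 = x" "(\<gamma> has_vector_derivative X) (at 0)"
      "((\<lambda>t. \<pi> (\<gamma> t) v) has_vector_derivative w) (at 0)" unfolding diff_image_def by blast
  have dc: "((\<lambda>t. c * t) has_vector_derivative c) (at (0::real))"
    using has_vector_derivative_mult_right[OF has_vector_derivative_id, of c] by simp
  have d1: "((\<gamma> \<circ> (\<lambda>t. c * t)) has_vector_derivative c *\<^sub>R X) (at 0)"
    by (rule vector_diff_chain_at[OF dc]) (use h in simp)
  have d2: "(((\<lambda>t. \<pi> (\<gamma> t) v) \<circ> (\<lambda>t. c * t)) has_vector_derivative c *\<^sub>R w) (at 0)"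
    by (rule vector_diff_chain_at[OF dc]) (use h in simp)
  show "c *\<^sub>R w \<in> diff_image G (\<lambda>g. \<pi> g v) x"
    unfolding diff_image_def using h d1 d2
    by (intro CollectI exI[of _ "\<lambda>t. \<gamma> (c * t)"] exI[of _ "c *\<^sub>R X"]) (auto simp: o_def)
next
  fix w1 w2 assume "w1 \<in> diff_image G (\<lambda>g. \<pi> g v) x" "w2 \<in> diff_image G (\<lambda>g. \<pi> g v) x"
  then obtain \<gamma>1 X1 \<gamma>2 X2 where h1: "\<forall>t. \<gamma>1 t \<in> G" "\<gamma>1 0 = x" "(\<gamma>1 has_vector_derivative X1) (at 0)"
      "((\<lambda>t. \<pi> (\<gamma>1 t) v) has_vector_derivative w1) (at 0)"
    and h2: "\<forall>t. \<gamma>2 t \<in> G" "\<gamma>2 0 = x" "(\<gamma>2 has_vector_derivative X2) (at 0)"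
      "((\<lambda>t. \<pi> (\<gamma>2 t) v) has_vector_derivative w2) (at 0)"
    unfolding diff_image_def by blast
  define xi where "xi = matrix_inv x"
  have xiG: "xi \<in> G" using mg xG by (simp add: matrix_group_def xi_def)
  have invx: "invertible x" using mg xG by (auto simp: matrix_group_def)
  have xix: "xi ** x = mat 1" "x ** xi = mat 1" using invertible_props[OF invx] by (simp_all add: xi_def)
  define \<gamma> where "\<gamma> t = \<gamma>1 t ** xi ** \<gamma>2 t" for t
  have \<gamma>G: "\<gamma> t \<in> G" for t using mg h1(1) h2(1) xiG by (simp add: \<gamma>_def matrix_group_def)
  have \<gamma>0: "\<gamma> 0 = x" by (simp add: \<gamma>_def h1(2) h2(2) xix matrix_mul_assoc)
  obtain X where X: "(\<gamma> has_vector_derivative X) (at 0)"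
    using mat_prod_vd[OF h1(3) h2(3), of xi] unfolding \<gamma>_def by blast
  have linxi: "linear (\<pi> xi)" by (rule rep_linear[OF rep xiG])
  have pid: "\<pi> (mat 1) = id" by (rule rep_id[OF rep])
  define u where "u t = \<pi> xi (\<pi> (\<gamma>2 t) v) - v" for t
  have u0: "u 0 = 0"
  proof -
    have "\<pi> xi (\<pi> x v) = \<pi> (xi ** x) v" using rep_mult[OF rep xiG xG] by simp
    then show ?thesis by (simp add: u_def h2(2) xix pid)
  qed
  have ud: "(u has_vector_derivative \<pi> xi w2) (at 0)"
  proof -
    have "((\<lambda>t. \<pi> xi (\<pi> (\<gamma>2 t) v)) has_vector_derivative \<pi> xi w2) (at 0)"
      by (rule bounded_linear.has_vector_derivative[OF _ h2(4)]) (use linxi linear_conv_bounded_linear in blast)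
    then show ?thesis unfolding u_def by (simp add: has_vector_derivative_diff_const)
  qed
  have g1: "(\<gamma>1 \<longlongrightarrow> x) (at 0)"
    using has_vector_derivative_continuous[OF h1(3)] h1(2) by (simp add: continuous_at)
  have part2: "((\<lambda>t. \<pi> (\<gamma>1 t) (u t)) has_vector_derivative \<pi> x (\<pi> xi w2)) (at 0)"
    by (rule rep_apply_deriv[OF rep g1 xG h1(1) u0 ud])
  have eq: "\<pi> (\<gamma> t) v = \<pi> (\<gamma>1 t) v + \<pi> (\<gamma>1 t) (u t)" for t
  proof -
    have lin1: "linear (\<pi> (\<gamma>1 t))" by (rule rep_linear[OF rep h1(1)[rule_format]])
    have "\<pi> (\<gamma> t) v = \<pi> (\<gamma>1 t) (\<pi> xi (\<pi> (\<gamma>2 t) v))"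
      using rep h1(1) h2(1) xiG mg unfolding \<gamma>_def representation_def matrix_group_def by simp
    also have "\<dots> = \<pi> (\<gamma>1 t) v + \<pi> (\<gamma>1 t) (u t)"
      by (simp add: u_def linear_diff[OF lin1])
    finally show ?thesis .
  qed
  have xxi: "\<pi> x (\<pi> xi w2) = w2"
  proof -
    have "\<pi> x (\<pi> xi w2) = \<pi> (x ** xi) w2" using rep_mult[OF rep xG xiG] by simp
    then show ?thesis by (simp add: xix pid)
  qed
  have fin: "((\<lambda>t. \<pi> (\<gamma> t) v) has_vector_derivative w1 + w2) (at 0)"
    unfolding eq using has_vector_derivative_add[OF h1(4) part2] xxi by simp
  have all: "\<forall>t. \<gamma> t \<in> G" using \<gamma>G by blast
  show "w1 + w2 \<in> diff_image G (\<lambda>g. \<pi> g v) x"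
    unfolding diff_image_def mem_Collect_eq
    by (rule exI[of _ \<gamma>], rule exI[of _ X]) (intro conjI all \<gamma>0 X fin)
qed


lemma set_sum_subspace:
  fixes D :: "nat \<Rightarrow> 'a::real_vector set"
  assumes "\<And>i. i < n \<Longrightarrow> subspace (D i)"
  shows "subspace (\<Sum>i<n. D i) \<and> (\<forall>j<n. D j \<subseteq> (\<Sum>i<n. D i))"
  using assms
proof (induction n)
  case 0 then show ?case by simp
next
  case (Suc n)
  have IH: "subspace (\<Sum>i<n. D i)" "\<forall>j<n. D j \<subseteq> (\<Sum>i<n. D i)" using Suc by auto
  have Dn: "subspace (D n)" using Suc by simp
  have eq: "(\<Sum>i<Suc n. D i) = {x + y |x y. x \<in> (\<Sum>i<n. D i) \<and> y \<in> D n}"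
    by (auto simp: set_plus_def)
  have sub: "subspace (\<Sum>i<Suc n. D i)" unfolding eq by (rule subspace_sums[OF IH(1) Dn])
  have "D j \<subseteq> (\<Sum>i<Suc n. D i)" if j: "j < Suc n" for j
  proof
    fix w assume w: "w \<in> D j"
    show "w \<in> (\<Sum>i<Suc n. D i)"
    proof (cases "j < n")
      case True
      then have "w \<in> (\<Sum>i<n. D i)" using IH(2) w by blast
      moreover have "0 \<in> D n" using Dn subspace_0 by blast
      ultimately show ?thesis unfolding eq by force
    next
      case False
      then have "j = n" using j by simp
      moreover have "0 \<in> (\<Sum>i<n. D i)" using IH(1) subspace_0 by blast
      ultimately show ?thesis unfolding eq using w by force
    qed
  qed
  then show ?case using sub by blast
qed

lemma bounded_linear_mat_left:
  fixes A :: "real^'n^'n"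
  shows "bounded_linear (\<lambda>M::real^'n^'n. A ** M)"
proof -
  have "(\<lambda>M::real^'n^'n. A ** M) = (\<lambda>M. psi (phi A * phi M))" by (simp add: psi_mult)
  moreover have "bounded_linear (\<lambda>M::real^'n^'n. psi (phi A * phi M))"
    by (rule bounded_linear_compose[OF bounded_linear_psi bounded_linear_compose[OF bounded_linear_mult_right bounded_linear_phi]])
  ultimately show ?thesis by simp
qed

lemma const_along:
  fixes \<pi> :: "real^'n^'n \<Rightarrow> 'v::euclidean_space \<Rightarrow> 'v"
  assumes rep: "representation G \<pi>" and hX: "\<forall>t. mexp (t *\<^sub>R X) \<in> G"
    and dB: "\<forall>u. ((\<lambda>t. \<pi> (mexp (t *\<^sub>R X)) u) has_vector_derivative B u) (at 0)"
    and aB: "\<forall>w. a \<bullet> B w = 0"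
  shows "a \<bullet> \<pi> (mexp (t *\<^sub>R X)) w = a \<bullet> w"
proof -
  define h where "h t = a \<bullet> \<pi> (mexp (t *\<^sub>R X)) w" for t
  have "DERIV h t :> 0" for t
  proof -
    define u where "u = \<pi> (mexp (t *\<^sub>R X)) w"
    have shift: "h (s + t) = a \<bullet> \<pi> (mexp (s *\<^sub>R X)) u" for s
    proof -
      have "\<pi> (mexp ((s + t) *\<^sub>R X)) = \<pi> (mexp (s *\<^sub>R X) ** mexp (t *\<^sub>R X))"
        by (simp add: mexp_add_scale)
      also have "\<dots> = \<pi> (mexp (s *\<^sub>R X)) \<circ> \<pi> (mexp (t *\<^sub>R X))"
        by (rule rep_mult[OF rep]) (use hX in auto)
      finally show ?thesis by (simp add: h_def u_def)
    qed
    have "((\<lambda>s. a \<bullet> \<pi> (mexp (s *\<^sub>R X)) u) has_vector_derivative a \<bullet> B u) (at 0)"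
      by (rule bounded_linear.has_vector_derivative[OF bounded_linear_inner_right]) (use dB in blast)
    then have "((\<lambda>s. h (s + t)) has_field_derivative 0) (at 0)"
      unfolding shift has_real_derivative_iff_has_vector_derivative[symmetric] using aB by simp
    then have "(h has_field_derivative 0) (at (0 + t))" by (simp only: DERIV_shift)
    then show ?thesis by simp
  qed
  then have "h t = h 0" by (intro DERIV_isconst_all) blast
  then show ?thesis by (simp add: h_def rep_id[OF rep])
qed

lemma invariant_all:
  fixes \<pi> :: "real^'n^'n \<Rightarrow> 'v::euclidean_space \<Rightarrow> 'v"
  assumes mg: "matrix_group G" and cl: "closed G" and conn: "connected G" and rep: "representation G \<pi>"
    and P: "\<And>X t w. \<forall>t. mexp (t *\<^sub>R X) \<in> G \<Longrightarrow> a \<bullet> \<pi> (mexp (t *\<^sub>R X)) w = a \<bullet> w"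
  shows "\<forall>g\<in>G. \<forall>w. a \<bullet> \<pi> g w = a \<bullet> w"
proof -
  define H where "H = {g\<in>G. \<forall>w. a \<bullet> \<pi> g w = a \<bullet> w}"
  have Hmult: "g ** h \<in> H" if "g \<in> H" "h \<in> H" for g h
  proof -
    have gh: "g \<in> G" "h \<in> G" using that by (auto simp: H_def)
    have "g ** h \<in> G" using mg gh by (simp add: matrix_group_def)
    moreover have "a \<bullet> \<pi> (g ** h) w = a \<bullet> w" for w
      using rep_mult[OF rep gh] that by (simp add: H_def)
    ultimately show ?thesis by (simp add: H_def)
  qed
  have H1: "mat 1 \<in> H" using mg rep_id[OF rep] by (simp add: H_def matrix_group_def)
  have Hexp: "mexp Y \<in> H" if "\<forall>t. mexp (t *\<^sub>R Y) \<in> G" for Y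
    using P[OF that, of 1] that[rule_format, of 1] by (simp add: H_def)
  have Hfold: "foldr (\<lambda>Y M. mexp Y ** M) Ys (mat 1) \<in> H"
    if "set Ys \<subseteq> {X. \<forall>t. mexp (t *\<^sub>R X) \<in> G}" for Ys
    using that by (induction Ys) (auto intro: H1 Hmult Hexp)
  obtain U0 where U0: "open U0" "mat 1 \<in> U0"
    "\<forall>g\<in>G \<inter> U0. \<exists>Ys. set Ys \<subseteq> {X. \<forall>t. mexp (t *\<^sub>R X) \<in> G} \<and> g = foldr (\<lambda>Y M. mexp Y ** M) Ys (mat 1)"
    using lie_local[OF mg cl] by blast
  have GU0: "G \<inter> U0 \<subseteq> H"
  proof
    fix g assume "g \<in> G \<inter> U0"
    then obtain Ys where "set Ys \<subseteq> {X. \<forall>t. mexp (t *\<^sub>R X) \<in> G}" "g = foldr (\<lambda>Y M. mexp Y ** M) Ys (mat 1)"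
      using U0(3) by blast
    then show "g \<in> H" using Hfold by simp
  qed
  have HG: "H \<subseteq> G" by (auto simp: H_def)
  have op: "openin (top_of_set G) H"
    unfolding openin_subopen[of _ H]
  proof
    fix h assume hH: "h \<in> H"
    then have hG: "h \<in> G" by (simp add: H_def)
    have invh: "invertible h" using mg hG by (auto simp: matrix_group_def)
    define T where "T = G \<inter> ((\<lambda>g. matrix_inv h ** g) -` U0)"
    have "open ((\<lambda>g. matrix_inv h ** g) -` U0)"
      by (rule continuous_open_vimage[OF U0(1)]) (rule linear_continuous_at[OF bounded_linear_mat_left])
    then have "openin (top_of_set G) T" unfolding T_def by (rule openin_open_Int)
    moreover have "h \<in> T" using hG U0(2) invertible_props(2)[OF invh] by (simp add: T_def)
    moreover have "T \<subseteq> H"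
    proof
      fix g assume gT: "g \<in> T"
      then have gG: "g \<in> G" by (simp add: T_def)
      have "matrix_inv h ** g \<in> G" using mg hG gG by (simp add: matrix_group_def)
      then have k: "matrix_inv h ** g \<in> H" using GU0 gT by (auto simp: T_def)
      have "g = h ** (matrix_inv h ** g)"
        by (simp add: matrix_mul_assoc invertible_props(1)[OF invh])
      then show "g \<in> H" using Hmult[OF hH k] by simp
    qed
    ultimately show "\<exists>T. openin (top_of_set G) T \<and> h \<in> T \<and> T \<subseteq> H" by blast
  qed
  define k where "k g = (\<Sum>b\<in>Basis. \<bar>a \<bullet> \<pi> g b - a \<bullet> b\<bar>)" for g
  have Hk: "H = {g\<in>G. k g = 0}"
  proof (intro set_eqI iffI)
    fix g assume "g \<in> H"
    then show "g \<in> {g\<in>G. k g = 0}" by (simp add: H_def k_def)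
  next
    fix g assume g: "g \<in> {g\<in>G. k g = 0}"
    then have gG: "g \<in> G" and k0: "k g = 0" by auto
    have bz: "a \<bullet> \<pi> g b = a \<bullet> b" if "b \<in> Basis" for b
      using k0 that by (simp add: k_def sum_nonneg_eq_0_iff)
    have "a \<bullet> \<pi> g w = a \<bullet> w" for w
    proof -
      have "a \<bullet> \<pi> g w = (\<Sum>b\<in>Basis. (w \<bullet> b) * (a \<bullet> \<pi> g b))"
        by (simp add: rep_expand[OF rep gG, of w] inner_sum_right)
      also have "\<dots> = (\<Sum>b\<in>Basis. (w \<bullet> b) * (a \<bullet> b))" by (simp add: bz)
      also have "\<dots> = a \<bullet> w"
        by (metis (no_types, lifting) euclidean_representation inner_scaleR_right inner_sum_right sum.cong)
      finally show ?thesis .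
    qed
    then show "g \<in> H" using gG by (simp add: H_def)
  qed
  have kc: "continuous_on G k"
    unfolding k_def by (intro continuous_intros rep_cont[OF rep])
  have cls: "closedin (top_of_set G) H"
    unfolding Hk by (rule continuous_closedin_preimage_constant[OF kc])
  have "H = {} \<or> H = G" using conn op cls by (simp add: connected_clopen)
  then have HG: "H = G" using H1 by blast
  show ?thesis
  proof (intro ballI allI)
    fix g w assume "g \<in> G"
    then have "g \<in> H" using HG by simp
    then show "a \<bullet> \<pi> g w = a \<bullet> w" by (simp add: H_def)
  qed
qed


theorem corollary2p5:
  fixes G :: "(real^'n^'n) set" and \<pi> :: "real^'n^'n \<Rightarrow> 'v::euclidean_space \<Rightarrow> 'v"
    and v :: 'v and x :: "nat \<Rightarrow> real^'n^'n" and n :: nat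
  assumes "matrix_group G" and "compact G" and "connected G"
    and "simple_lie_algebra (lie_algebra G)"
    and "irreducible_rep G \<pi>"
    and "\<forall>i<n. x i \<in> G"
    and "0 \<in> interior (convex hull ((\<lambda>i. \<pi> (x i) v) ` {..<n}))"
  shows "(\<Sum>i<n. diff_image G (\<lambda>g. \<pi> g v) (x i)) = UNIV"
proof (rule ccontr)
  note mg = assms(1) and conn = assms(3) and xs = assms(6) and int0 = assms(7)
  have cl: "closed G" using assms(2) compact_imp_closed by blast
  have rep: "representation G \<pi>" using assms(5) by (simp add: irreducible_rep_def)
  have irr: "\<And>W. subspace W \<Longrightarrow> (\<forall>g\<in>G. \<pi> g ` W \<subseteq> W) \<Longrightarrow> W = {0} \<or> W = UNIV"
    using assms(5) by (simp add: irreducible_rep_def)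
  define D where "D i = diff_image G (\<lambda>g. \<pi> g v) (x i)" for i
  define W where "W = (\<Sum>i<n. D i)"
  have subD: "subspace (D i)" if "i < n" for i
    unfolding D_def by (rule diff_image_subspace[OF mg rep]) (use xs that in auto)
  have WW: "subspace W \<and> (\<forall>j<n. D j \<subseteq> W)"
    unfolding W_def by (rule set_sum_subspace[OF subD])
  assume "(\<Sum>i<n. diff_image G (\<lambda>g. \<pi> g v) (x i)) \<noteq> UNIV"
  then have WU: "W \<noteq> UNIV" by (simp add: W_def D_def)
  have "span W \<subset> span (UNIV :: 'v set)"
    using WU WW span_eq_iff by (metis span_UNIV psubsetI subset_UNIV)
  then obtain a :: 'v where a0: "a \<noteq> 0" and aW: "\<And>y. y \<in> span W \<Longrightarrow> orthogonal a y"
    using orthogonal_to_subspace_exists_gen by blast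
  have aW': "a \<bullet> y = 0" if "y \<in> W" for y
    using aW[OF span_base[OF that]] by (simp add: orthogonal_def)
  define u where "u i = \<pi> (x i) v" for i
  have key: "a \<bullet> B (u i) = 0"
    if hX: "\<forall>t. mexp (t *\<^sub>R X) \<in> G" and dB: "\<forall>u. ((\<lambda>t. \<pi> (mexp (t *\<^sub>R X)) u) has_vector_derivative B u) (at 0)"
      and i: "i < n" for X B i
  proof -
    define \<gamma> where "\<gamma> t = mexp (t *\<^sub>R X) ** x i" for t
    have xi: "x i \<in> G" using xs i by simp
    have \<gamma>G: "\<forall>t. \<gamma> t \<in> G" using mg hX xi by (simp add: \<gamma>_def matrix_group_def)
    have \<gamma>0: "\<gamma> 0 = x i" by (simp add: \<gamma>_def)
    have \<gamma>d: "(\<gamma> has_vector_derivative X ** x i) (at 0)"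
      unfolding \<gamma>_def by (rule bounded_linear.has_vector_derivative[OF bounded_linear_mat_right mexp_vector_derivative_0])
    have feq: "\<pi> (\<gamma> t) v = \<pi> (mexp (t *\<^sub>R X)) (u i)" for t
      using rep_mult[OF rep hX[rule_format] xi] by (simp add: \<gamma>_def u_def)
    have "((\<lambda>t. \<pi> (\<gamma> t) v) has_vector_derivative B (u i)) (at 0)"
      unfolding feq using dB by blast
    then have "B (u i) \<in> D i"
      unfolding D_def diff_image_def mem_Collect_eq
      by (intro exI[of _ \<gamma>] exI[of _ "X ** x i"] conjI \<gamma>G \<gamma>0 \<gamma>d)
    then show ?thesis using WW i aW' by blast
  qed
  show False
  proof (cases "\<exists>X B w. (\<forall>t. mexp (t *\<^sub>R X) \<in> G) \<and> linear B
                 \<and> (\<forall>u. ((\<lambda>t. \<pi> (mexp (t *\<^sub>R X)) u) has_vector_derivative B u) (at 0)) \<and> a \<bullet> B w \<noteq> 0")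
    case True
    then obtain X B w where hX: "\<forall>t. mexp (t *\<^sub>R X) \<in> G" and linB: "linear B"
      and dB: "\<forall>u. ((\<lambda>t. \<pi> (mexp (t *\<^sub>R X)) u) has_vector_derivative B u) (at 0)"
      and w: "a \<bullet> B w \<noteq> 0" by blast
    define c where "c = adjoint B a"
    have cw: "y \<bullet> c = a \<bullet> B y" for y
      unfolding c_def using adjoint_works[OF linB, of y a] by (simp add: inner_commute)
    have c0: "c \<noteq> 0" using cw[of w] w by auto
    have "(\<lambda>i. \<pi> (x i) v) ` {..<n} \<subseteq> {y. c \<bullet> y = 0}"
      using key[OF hX dB] cw by (auto simp: u_def inner_commute)
    then have "convex hull ((\<lambda>i. \<pi> (x i) v) ` {..<n}) \<subseteq> {y. c \<bullet> y = 0}"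
      by (rule hull_minimal) (rule convex_hyperplane)
    then have "interior (convex hull ((\<lambda>i. \<pi> (x i) v) ` {..<n})) \<subseteq> interior {y. c \<bullet> y = 0}"
      by (rule interior_mono)
    then show False using int0 c0 by auto
  next
    case False
    have P: "a \<bullet> \<pi> (mexp (t *\<^sub>R X)) w = a \<bullet> w" if hX: "\<forall>t. mexp (t *\<^sub>R X) \<in> G" for X t w
    proof -
      obtain B where linB: "linear B"
        and dB: "\<forall>u. ((\<lambda>t. \<pi> (mexp (t *\<^sub>R X)) u) has_vector_derivative B u) (at 0)"
        using oneparam_deriv[OF rep hX] by blast
      have "\<forall>w. a \<bullet> B w = 0" using False hX linB dB by blast
      then show ?thesis by (rule const_along[OF rep hX dB])
    qed
    have inv: "\<forall>g\<in>G. \<forall>w. a \<bullet> \<pi> g w = a \<bullet> w"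
      by (rule invariant_all[OF mg cl conn rep P])
    have "{y. a \<bullet> y = 0} = {0} \<or> {y. a \<bullet> y = 0} = UNIV"
    proof (rule irr)
      show "subspace {y. a \<bullet> y = 0}" by (rule subspace_hyperplane)
      show "\<forall>g\<in>G. \<pi> g ` {y. a \<bullet> y = 0} \<subseteq> {y. a \<bullet> y = 0}" using inv by auto
    qed
    moreover have "{y. a \<bullet> y = 0} \<noteq> UNIV"
    proof
      assume "{y. a \<bullet> y = 0} = UNIV"
      then have "a \<bullet> a = 0" by blast
      then show False using a0 by simp
    qed
    ultimately have K0: "{y. a \<bullet> y = 0} = {0}" by blast
    have fix1: "\<pi> g v = v" if "g \<in> G" for g
    proof -
      have "a \<bullet> (\<pi> g v - v) = 0" using inv that by (simp add: inner_diff_right)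
      then have "\<pi> g v - v \<in> {y. a \<bullet> y = 0}" by simp
      then show ?thesis using K0 by simp
    qed
    have "(\<lambda>i. \<pi> (x i) v) ` {..<n} \<subseteq> {v}" using fix1 xs by auto
    then have "convex hull ((\<lambda>i. \<pi> (x i) v) ` {..<n}) \<subseteq> {v}"
      by (rule hull_minimal) (rule convex_singleton)
    then have "interior (convex hull ((\<lambda>i. \<pi> (x i) v) ` {..<n})) \<subseteq> interior {v}"
      by (rule interior_mono)
    then show False using int0 by simp
  qed
qed


end
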